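(* Let $X$ and $Y$ be metric spaces. Assume that $A(X)$ is an adequate subspace of $C(X)$ and that either (a) $A(X)=A^{\mathrm{loc}}(X)$ or $A(X)=A^{\mathrm{loc}}_b(X)$, or (b) $X$ is complete and for every separated sequence $(x_n)$ in $X$ there exists $f\in A(X)$ with $f(x_{2n})=1$ and $f(x_{2n-1})=0$ for all $n$. Assume likewise that $A(Y)$ is an adequate subspace of $C(Y)$ satisfying (a) or (b) with $Y$ in place of $X$. If $T:A(X)\to A(Y)$ is a linear order isomorphism such that $T(A_b(X))=A_b(Y)$, then there is a homeomorphism $h:X\to Y$ such that $Tf = T1_X\cdot (f\circ h^{-1})$ and $T^{-1}g = T^{-1}1_Y\cdot (g\circ h)$ for all $f\in A(X)$ and $g\in A(Y)$.
   Context: All functions are real-valued; $1_X$ is the constant $1$. $A(X)\subseteq C(X)$ separates points from closed sets if for every $x\in X$ and closed $F\not\ni x$ there is $f\in A(X)$ with $f(x)=1$, $f=0$ on $F$. $A(X)$ is adequate if (a) it separates points from closed sets and contains the constants; (b) there is a continuous nondecreasing $g:\mathbb{R}\to\mathbb{R}$ with $g(t)=0$ for $t\le0$, $g(t)=1$ for $t\ge1$, and $g\circ f\in A(X)$ for all $f\in A(X)$; (c) every $f\in A(X)$ is a difference of two nonnegative elements of $A(X)$. $A_b(X)$ is the set of bounded functions in $A(X)$. $A^{\mathrm{loc}}(X)$ is the space of real functions $f$ on $X$ such that every $x_0\in X$ has a neighborhood $U$ and some $g\in A(X)$ with $f=g$ on $U$; $A^{\mathrm{loc}}_b(X)$ is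 its bounded part. A sequence in a metric space is separated if there is $\varepsilon>0$ such that any two distinct points of it are at distance $\ge\varepsilon$. A linear bijection $T$ is an order isomorphism if $f\ge0\iff Tf\ge0$. *)

theory Defs
  imports "HOL-Analysis.Analysis"
begin

text \<open>The metric space X is modelled as the whole of a type of class metric_space.
  Functions are real-valued functions on that type.\<close>

definition lin_subspace_C :: "('a::metric_space \<Rightarrow> real) set \<Rightarrow> bool" where
  "lin_subspace_C A \<longleftrightarrow>
     (\<forall>f\<in>A. continuous_on UNIV f) \<and>
     (\<lambda>_. 0) \<in> A \<and>
     (\<forall>f\<in>A. \<forall>g\<in>A. (\<lambda>x. f x + g x) \<in> A) \<and>
     (\<forall>f\<in>A. \<forall>c::real. (\<lambda>x. c * f x) \<in> A)"

definition separates_points_closed :: "('a::topological_space \<Rightarrow> real) set \<Rightarrow> bool" where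
  "separates_points_closed A \<longleftrightarrow>
     (\<forall>x F. closed F \<and> x \<notin> F \<longrightarrow> (\<exists>f\<in>A. f x = 1 \<and> (\<forall>y\<in>F. f y = 0)))"

definition adequate :: "('a::metric_space \<Rightarrow> real) set \<Rightarrow> bool" where
  "adequate A \<longleftrightarrow>
     lin_subspace_C A \<and>
     separates_points_closed A \<and> (\<forall>c. (\<lambda>_. c) \<in> A) \<and>
     (\<exists>g::real \<Rightarrow> real. continuous_on UNIV g \<and> mono g \<and>
        (\<forall>t\<le>0. g t = 0) \<and> (\<forall>t\<ge>1. g t = 1) \<and> (\<forall>f\<in>A. g \<circ> f \<in> A)) \<and>
     (\<forall>f\<in>A. \<exists>u\<in>A. \<exists>v\<in>A. (\<forall>x. u x \<ge> 0) \<and> (\<forall>x. v x \<ge> 0) \<and> f = (\<lambda>x. u x - v x))"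

definition bounded_part :: "('a \<Rightarrow> real) set \<Rightarrow> ('a \<Rightarrow> real) set" where
  "bounded_part A = {f\<in>A. bounded (range f)}"

definition loc_space :: "('a::topological_space \<Rightarrow> real) set \<Rightarrow> ('a \<Rightarrow> real) set" where
  "loc_space A = {f. \<forall>x0. \<exists>U. open U \<and> x0 \<in> U \<and> (\<exists>g\<in>A. \<forall>x\<in>U. f x = g x)}"

definition separated_seq :: "(nat \<Rightarrow> 'a::metric_space) \<Rightarrow> bool" where
  "separated_seq x \<longleftrightarrow> (\<exists>\<epsilon>>0. \<forall>m n. m \<noteq> n \<longrightarrow> dist (x m) (x n) \<ge> \<epsilon>)"

text \<open>Conditions (a) or (b) of the theorem. Sequences are indexed from 0, so the
  paper's x_1, x_2, ... correspond to x 0, x 1, ...; hence x_{2n} = x (2m+1) and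
  x_{2n-1} = x (2m).\<close>
definition cond_a_or_b :: "('a::metric_space \<Rightarrow> real) set \<Rightarrow> bool" where
  "cond_a_or_b A \<longleftrightarrow>
     (A = loc_space A \<or> A = bounded_part (loc_space A)) \<or>
     (complete (UNIV :: 'a set) \<and>
      (\<forall>x. separated_seq x \<longrightarrow>
         (\<exists>f\<in>A. \<forall>m. f (x (2*m+1)) = 1 \<and> f (x (2*m)) = 0)))"

definition order_iso :: "('a \<Rightarrow> real) set \<Rightarrow> ('b \<Rightarrow> real) set \<Rightarrow>
     (('a \<Rightarrow> real) \<Rightarrow> ('b \<Rightarrow> real)) \<Rightarrow> bool" where
  "order_iso AX AY T \<longleftrightarrow>
     bij_betw T AX AY \<and>
     (\<forall>f\<in>AX. \<forall>g\<in>AX. T (\<lambda>x. f x + g x) = (\<lambda>y. T f y + T g y)) \<and>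
     (\<forall>f\<in>AX. \<forall>c::real. T (\<lambda>x. c * f x) = (\<lambda>y. c * T f y)) \<and>
     (\<forall>f\<in>AX. (\<forall>x. f x \<ge> 0) \<longleftrightarrow> (\<forall>y. T f y \<ge> 0))"

end

theory Submission
  imports Defs
begin

section \<open>Basic facts on adequate spaces\<close>

lemma adq_lin: "adequate A \<Longrightarrow> lin_subspace_C A"
  by (simp add: adequate_def)

lemma adq_cont: "adequate A \<Longrightarrow> f \<in> A \<Longrightarrow> continuous_on UNIV f"
  by (simp add: adequate_def lin_subspace_C_def)

lemma adq_add: "adequate A \<Longrightarrow> f \<in> A \<Longrightarrow> g \<in> A \<Longrightarrow> (\<lambda>x. f x + g x) \<in> A"
  by (simp add: adequate_def lin_subspace_C_def)

lemma adq_scale: "adequate A \<Longrightarrow> f \<in> A \<Longrightarrow> (\<lambda>x. c * f x) \<in> A"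
  by (simp add: adequate_def lin_subspace_C_def)

lemma adq_const: "adequate A \<Longrightarrow> (\<lambda>_. c) \<in> A"
  by (simp add: adequate_def)

lemma adq_zero: "adequate A \<Longrightarrow> (\<lambda>_. 0) \<in> A"
  by (simp add: adequate_def)

lemma adq_diff: "adequate A \<Longrightarrow> f \<in> A \<Longrightarrow> g \<in> A \<Longrightarrow> (\<lambda>x. f x - g x) \<in> A"
proof -
  assume a: "adequate A" "f \<in> A" "g \<in> A"
  have "(\<lambda>x. (-1) * g x) \<in> A" using a adq_scale by blast
  from adq_add[OF a(1) a(2) this] show ?thesis by simp
qed

lemma adq_affine: "adequate A \<Longrightarrow> f \<in> A \<Longrightarrow> (\<lambda>x. a * f x + c) \<in> A"
  using adq_add adq_scale adq_const by blast

lemma adq_sep: "adequate A \<Longrightarrow> closed F \<Longrightarrow> x \<notin> F \<Longrightarrow> \<exists>f\<in>A. f x = 1 \<and> (\<forall>y\<in>F. f y = 0)"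
  by (simp add: adequate_def separates_points_closed_def)

lemma adq_decomp: "adequate A \<Longrightarrow> f \<in> A \<Longrightarrow>
   \<exists>u\<in>A. \<exists>v\<in>A. (\<forall>x. u x \<ge> 0) \<and> (\<forall>x. v x \<ge> 0) \<and> f = (\<lambda>x. u x - v x)"
  by (simp add: adequate_def)

lemma adq_G: assumes "adequate A"
  obtains G :: "real \<Rightarrow> real" where "\<And>t. 0 \<le> G t" "\<And>t. G t \<le> 1"
    "\<And>t. t \<le> 0 \<Longrightarrow> G t = 0" "\<And>t. t \<ge> 1 \<Longrightarrow> G t = 1"
    "\<And>f. f \<in> A \<Longrightarrow> (\<lambda>x. G (f x)) \<in> A"
proof -
  obtain G :: "real \<Rightarrow> real" where G: "mono G" "\<forall>t\<le>0. G t = 0" "\<forall>t\<ge>1. G t = 1"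
      "\<forall>f\<in>A. G \<circ> f \<in> A"
    using assms unfolding adequate_def by blast
  have "0 \<le> G t" for t
  proof (cases "t \<le> 0")
    case True then show ?thesis using G by simp
  next
    case False then have "G 0 \<le> G t" using G(1) by (simp add: mono_def)
    then show ?thesis using G by simp
  qed
  moreover have "G t \<le> 1" for t
  proof (cases "t \<ge> 1")
    case True then show ?thesis using G by simp
  next
    case False then have "G t \<le> G 1" using G(1) by (simp add: mono_def)
    then show ?thesis using G by simp
  qed
  moreover have "\<And>f. f \<in> A \<Longrightarrow> (\<lambda>x. G (f x)) \<in> A" using G(4) by (simp add: o_def)
  ultimately show ?thesis using that G by blast
qed

lemma adq_bump:
  assumes "adequate A" "open U" "x \<in> U"
  shows "\<exists>b\<in>A. (\<forall>z. 0 \<le> b z \<and> b z \<le> 1) \<and> b x = 1 \<and> (\<forall>z. z \<notin> U \<longrightarrow> b z = 0)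
     \<and> (\<exists>s>0. \<forall>z. dist x z < s \<longrightarrow> b z = 1)"
proof -
  obtain G :: "real \<Rightarrow> real" where G: "\<And>t. 0 \<le> G t" "\<And>t. G t \<le> 1"
    "\<And>t. t \<le> 0 \<Longrightarrow> G t = 0" "\<And>t. t \<ge> 1 \<Longrightarrow> G t = 1"
    "\<And>f. f \<in> A \<Longrightarrow> (\<lambda>x. G (f x)) \<in> A" using adq_G[OF assms(1)] by metis
  have "closed (- U)" using assms(2) by auto
  then obtain \<phi> where \<phi>: "\<phi> \<in> A" "\<phi> x = 1" "\<forall>y\<in>-U. \<phi> y = 0"
    using adq_sep[OF assms(1)] assms(3) by blast
  have c: "continuous_on UNIV \<phi>" using adq_cont assms(1) \<phi>(1) by blast
  then obtain s where s: "s > 0" "\<forall>z. dist z x < s \<longrightarrow> dist (\<phi> z) (\<phi> x) < 1/2"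
    unfolding continuous_on_iff by (metis UNIV_I half_gt_zero_iff zero_less_one)
  let ?b = "\<lambda>z. G (2 * \<phi> z)"
  have "?b \<in> A" using G(5) adq_scale[OF assms(1) \<phi>(1)] by blast
  moreover have "\<forall>z. dist x z < s \<longrightarrow> ?b z = 1"
  proof (intro allI impI)
    fix z assume "dist x z < s"
    then have "dist (\<phi> z) (\<phi> x) < 1/2" using s by (metis dist_commute)
    then have "2 * \<phi> z \<ge> 1" using \<phi>(2) by (simp add: dist_real_def abs_if split: if_splits)
    then show "?b z = 1" using G(4) by simp
  qed
  moreover have "\<forall>z. z \<notin> U \<longrightarrow> ?b z = 0" using \<phi>(3) G(3) by simp
  moreover have "?b x = 1" using \<phi>(2) G(4) by simp
  ultimately show ?thesis using G(1,2) s(1) by (intro bexI[of _ ?b]) auto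
qed

section \<open>Order isomorphisms\<close>

lemma oi_bij: "order_iso A B T \<Longrightarrow> bij_betw T A B"
  by (simp add: order_iso_def)

lemma oi_in: "order_iso A B T \<Longrightarrow> f \<in> A \<Longrightarrow> T f \<in> B"
  unfolding order_iso_def bij_betw_def by blast

lemma oi_surj: "order_iso A B T \<Longrightarrow> g \<in> B \<Longrightarrow> \<exists>f\<in>A. T f = g"
  unfolding order_iso_def bij_betw_def by blast

lemma oi_add: "order_iso A B T \<Longrightarrow> f \<in> A \<Longrightarrow> g \<in> A \<Longrightarrow> T (\<lambda>x. f x + g x) = (\<lambda>y. T f y + T g y)"
  by (simp add: order_iso_def)

lemma oi_scale: "order_iso A B T \<Longrightarrow> f \<in> A \<Longrightarrow> T (\<lambda>x. c * f x) = (\<lambda>y. c * T f y)"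
  by (simp add: order_iso_def)

lemma oi_pos: "order_iso A B T \<Longrightarrow> f \<in> A \<Longrightarrow> (\<forall>x. f x \<ge> 0) \<longleftrightarrow> (\<forall>y. T f y \<ge> 0)"
  by (simp add: order_iso_def)

lemma oi_zero: "adequate A \<Longrightarrow> order_iso A B T \<Longrightarrow> T (\<lambda>_. 0) = (\<lambda>_. 0)"
  using oi_scale[of A B T "\<lambda>_. 0" 0] adq_zero[of A] by simp

lemma oi_diff: "adequate A \<Longrightarrow> order_iso A B T \<Longrightarrow> f \<in> A \<Longrightarrow> g \<in> A \<Longrightarrow>
    T (\<lambda>x. f x - g x) = (\<lambda>y. T f y - T g y)"
proof -
  assume a: "adequate A" "order_iso A B T" "f \<in> A" "g \<in> A"
  have m: "(\<lambda>x. (-1) * g x) \<in> A" using a adq_scale by blast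
  have "T (\<lambda>x. f x + (-1) * g x) = (\<lambda>y. T f y + T (\<lambda>x. (-1) * g x) y)"
    using oi_add[OF a(2) a(3) m] .
  also have "\<dots> = (\<lambda>y. T f y - T g y)" using oi_scale[OF a(2) a(4), of "-1"] by simp
  finally show ?thesis by simp
qed

lemma oi_mono: "adequate A \<Longrightarrow> order_iso A B T \<Longrightarrow> f \<in> A \<Longrightarrow> g \<in> A \<Longrightarrow>
    (\<forall>x. f x \<le> g x) \<longleftrightarrow> (\<forall>y. T f y \<le> T g y)"
proof -
  assume a: "adequate A" "order_iso A B T" "f \<in> A" "g \<in> A"
  have d: "(\<lambda>x. g x - f x) \<in> A" using adq_diff a by blast
  have "(\<forall>x. f x \<le> g x) \<longleftrightarrow> (\<forall>x. (\<lambda>x. g x - f x) x \<ge> 0)" by auto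
  also have "\<dots> \<longleftrightarrow> (\<forall>y. T (\<lambda>x. g x - f x) y \<ge> 0)" using oi_pos[OF a(2) d] .
  also have "\<dots> \<longleftrightarrow> (\<forall>y. T f y \<le> T g y)" using oi_diff[OF a(1,2) a(4) a(3)] by simp
  finally show ?thesis .
qed

lemma oi_const: "adequate A \<Longrightarrow> order_iso A B T \<Longrightarrow> T (\<lambda>_. c) = (\<lambda>y. c * T (\<lambda>_. 1) y)"
  using oi_scale[of A B T "\<lambda>_. 1" c] adq_const[of A 1] by simp

lemma oi_inv: assumes "order_iso A B T" "adequate A" shows "order_iso B A (inv_into A T)"
proof -
  have bij: "bij_betw T A B" using assms oi_bij by blast
  have inj: "inj_on T A" using bij bij_betw_def by blast
  have S_in: "inv_into A T g \<in> A" and TS: "T (inv_into A T g) = g" if "g \<in> B" for g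
    using that bij by (auto simp: bij_betw_def inv_into_into f_inv_into_f)
  have ST: "inv_into A T (T f) = f" if "f \<in> A" for f using inj that by simp
  show ?thesis unfolding order_iso_def
  proof (intro conjI ballI allI)
    show "bij_betw (inv_into A T) B A" using bij bij_betw_inv_into by blast
  next
    fix f g assume fg: "f \<in> B" "g \<in> B"
    let ?f = "inv_into A T f" and ?g = "inv_into A T g"
    have "T (\<lambda>x. ?f x + ?g x) = (\<lambda>y. f y + g y)"
      using oi_add[OF assms(1) S_in[OF fg(1)] S_in[OF fg(2)]] TS fg by simp
    then have "inv_into A T (\<lambda>y. f y + g y) = inv_into A T (T (\<lambda>x. ?f x + ?g x))" by simp
    also have "\<dots> = (\<lambda>x. ?f x + ?g x)"
      using ST adq_add[OF assms(2) S_in[OF fg(1)] S_in[OF fg(2)]] by blast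
    finally show "inv_into A T (\<lambda>x. f x + g x) = (\<lambda>y. inv_into A T f y + inv_into A T g y)" .
  next
    fix f c assume f: "f \<in> B"
    let ?f = "inv_into A T f"
    have "T (\<lambda>x. c * ?f x) = (\<lambda>y. c * f y)"
      using oi_scale[OF assms(1) S_in[OF f]] TS f by simp
    moreover have "(\<lambda>x. c * ?f x) \<in> A" using adq_scale[OF assms(2) S_in[OF f]] .
    ultimately show "inv_into A T (\<lambda>x. c * f x) = (\<lambda>y. c * inv_into A T f y)"
      using ST by metis
  next
    fix f assume f: "f \<in> B"
    show "(\<forall>x. 0 \<le> f x) = (\<forall>y. 0 \<le> inv_into A T f y)"
      using oi_pos[OF assms(1) S_in[OF f]] TS[OF f] by simp
  qed
qed

lemma oi_inv_bdd: assumes "order_iso A B T" "T ` bounded_part A = bounded_part B"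
  shows "inv_into A T ` bounded_part B = bounded_part A"
proof -
  have inj: "inj_on T A" using assms(1) oi_bij bij_betw_def by blast
  have "bounded_part A \<subseteq> A" by (auto simp: bounded_part_def)
  then show ?thesis using inv_into_image_cancel[OF inj] assms(2) by metis
qed

lemma open_gt: "continuous_on UNIV f \<Longrightarrow> open {z. c < (f z::real)}"
  using open_Collect_less[of "\<lambda>_. c" f] by (simp add: continuous_on_const)

lemma oi_disj:
  assumes A: "adequate A" and B: "adequate B" and T: "order_iso A B T"
    and f: "f \<in> A" "\<forall>x. f x \<ge> 0" and g: "g \<in> A" "\<forall>x. g x \<ge> 0"
    and d: "\<forall>x. f x = 0 \<or> g x = 0"
  shows "T f y = 0 \<or> T g y = 0"
proof (rule ccontr)
  assume n: "\<not> (T f y = 0 \<or> T g y = 0)"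
  have p: "T f y > 0" "T g y > 0" using n oi_pos[OF T f(1)] oi_pos[OF T g(1)] f(2) g(2)
    by (metis less_eq_real_def)+
  define c where "c = min (T f y) (T g y) / 2"
  have c: "c > 0" "c < T f y" "c < T g y" using p by (auto simp: c_def)
  have cf: "continuous_on UNIV (T f)" "continuous_on UNIV (T g)"
    using adq_cont[OF B] oi_in[OF T] f g by blast+
  let ?U = "{z. c < T f z} \<inter> {z. c < T g z}"
  have "open ?U" using open_gt[OF cf(1)] open_gt[OF cf(2)] by blast
  then obtain b where b: "b \<in> B" "\<forall>z. 0 \<le> b z \<and> b z \<le> 1" "b y = 1" "\<forall>z. z \<notin> ?U \<longrightarrow> b z = 0"
    using adq_bump[OF B, of ?U y] c by auto
  have b'B: "(\<lambda>z. c * b z) \<in> B" using adq_scale[OF B b(1)] .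
  obtain q where q: "q \<in> A" "T q = (\<lambda>z. c * b z)" using oi_surj[OF T b'B] by blast
  have "\<forall>y. T q y \<le> T f y"
  proof
    fix z show "T q z \<le> T f z"
    proof (cases "z \<in> ?U")
      case True then show ?thesis using q(2) b(2) c(1) by (auto intro: order.trans[of _ c] simp: mult_le_cancel_left1)
    next
      case False then show ?thesis using q(2) b(4) f(2) oi_pos[OF T f(1)] by simp
    qed
  qed
  then have qf: "\<forall>x. q x \<le> f x" using oi_mono[OF A T q(1) f(1)] by blast
  have "\<forall>y. T q y \<le> T g y"
  proof
    fix z show "T q z \<le> T g z"
    proof (cases "z \<in> ?U")
      case True then show ?thesis using q(2) b(2) c(1) by (auto intro: order.trans[of _ c] simp: mult_le_cancel_left1)
    next
      case False then show ?thesis using q(2) b(4) g(2) oi_pos[OF T g(1)] by simp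
    qed
  qed
  then have qg: "\<forall>x. q x \<le> g x" using oi_mono[OF A T q(1) g(1)] by blast
  have q0: "\<forall>x. q x \<ge> 0" using oi_pos[OF T q(1)] q(2) b(2) c(1) by simp
  have "q = (\<lambda>_. 0)"
  proof
    fix x show "q x = 0" using qf qg q0 d by (metis order_antisym)
  qed
  then have "T q = (\<lambda>_. 0)" using oi_zero[OF A T] by simp
  then show False using q(2) b(3) c(1) by (metis mult_cancel_left1 less_irrefl)
qed

section \<open>Oscillating functions along sequences without cluster points\<close>


lemma osc_from_f:
  fixes A :: "('a::metric_space \<Rightarrow> real) set" and xs :: "nat \<Rightarrow> 'a" and \<sigma> :: "nat \<Rightarrow> nat"
  assumes A: "adequate A" and f: "f \<in> A"
    and osc: "\<forall>m. f (xs (\<sigma> (2*m+1))) = 1 \<and> f (xs (\<sigma> (2*m))) = 0" and sg: "\<forall>j. j \<le> \<sigma> j"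
  shows "\<exists>f1\<in>A. \<exists>f2\<in>A. (\<forall>z. f1 z \<ge> 0) \<and> (\<forall>z. f2 z \<ge> 0) \<and> (\<forall>z. f1 z = 0 \<or> f2 z = 0) \<and>
    (\<forall>N. \<exists>m\<ge>N. \<exists>\<rho>>0. \<forall>z. dist (xs m) z < \<rho> \<longrightarrow> f1 z \<ge> 1) \<and>
    (\<forall>N. \<exists>m\<ge>N. \<exists>\<rho>>0. \<forall>z. dist (xs m) z < \<rho> \<longrightarrow> f2 z \<ge> 1)"
proof -
  obtain G :: "real \<Rightarrow> real" where G: "\<And>t. 0 \<le> G t" "\<And>t. G t \<le> 1"
    "\<And>t. t \<le> 0 \<Longrightarrow> G t = 0" "\<And>t. t \<ge> 1 \<Longrightarrow> G t = 1"
    "\<And>f. f \<in> A \<Longrightarrow> (\<lambda>x. G (f x)) \<in> A" using adq_G[OF A] by metis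
  define f1 where "f1 = (\<lambda>x. G (6 * f x + (-4)))"
  define f2 where "f2 = (\<lambda>x. G ((-6) * f x + 2))"
  have f1A: "f1 \<in> A" unfolding f1_def using G(5)[OF adq_affine[OF A f]] .
  have f2A: "f2 \<in> A" unfolding f2_def using G(5)[OF adq_affine[OF A f]] .
  have cf: "continuous_on UNIV f" using adq_cont[OF A f] .
  then have cont: "\<forall>\<epsilon>>0. \<exists>d>0. \<forall>z\<in>UNIV. dist z x < d \<longrightarrow> dist (f z) (f x) < \<epsilon>" for x
    unfolding continuous_on_iff by blast
  have near: "\<exists>\<rho>>0. \<forall>z. dist x z < \<rho> \<longrightarrow> \<bar>f z - f x\<bar> < 1/6" for x
  proof -
    obtain d where "d > 0" "\<forall>z. dist z x < d \<longrightarrow> dist (f z) (f x) < 1/6"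
      using cont[of x] by (metis UNIV_I divide_pos_pos zero_less_numeral zero_less_one)
    then show ?thesis by (metis dist_commute dist_real_def)
  qed
  have disj: "\<forall>z. f1 z = 0 \<or> f2 z = 0"
  proof
    fix z show "f1 z = 0 \<or> f2 z = 0"
    proof (cases "6 * f z + (-4) \<le> 0")
      case True then show ?thesis unfolding f1_def using G(3) by simp
    next
      case False then have "(-6) * f z + 2 \<le> 0" by simp
      then show ?thesis unfolding f2_def using G(3) by simp
    qed
  qed
  have p1: "\<forall>N. \<exists>m\<ge>N. \<exists>\<rho>>0. \<forall>z. dist (xs m) z < \<rho> \<longrightarrow> f1 z \<ge> 1"
  proof
    fix N
    let ?m = "\<sigma> (2*N+1)"
    obtain \<rho> where \<rho>: "\<rho> > 0" "\<forall>z. dist (xs ?m) z < \<rho> \<longrightarrow> \<bar>f z - f (xs ?m)\<bar> < 1/6" using near by blast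
    have "\<forall>z. dist (xs ?m) z < \<rho> \<longrightarrow> f1 z \<ge> 1"
    proof (intro allI impI)
      fix z assume "dist (xs ?m) z < \<rho>"
      then have "\<bar>f z - 1\<bar> < 1/6" using \<rho>(2) osc by metis
      then have "f z - 1 > -1/6" unfolding abs_less_iff by linarith
      then have "6 * f z + (-4) \<ge> 1" by linarith
      then show "f1 z \<ge> 1" unfolding f1_def using G(4) by simp
    qed
    moreover have "?m \<ge> N" using sg[rule_format, of "2*N+1"] by simp
    ultimately show "\<exists>m\<ge>N. \<exists>\<rho>>0. \<forall>z. dist (xs m) z < \<rho> \<longrightarrow> f1 z \<ge> 1" using \<rho>(1) by blast
  qed
  have p2: "\<forall>N. \<exists>m\<ge>N. \<exists>\<rho>>0. \<forall>z. dist (xs m) z < \<rho> \<longrightarrow> f2 z \<ge> 1"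
  proof
    fix N
    let ?m = "\<sigma> (2*N)"
    obtain \<rho> where \<rho>: "\<rho> > 0" "\<forall>z. dist (xs ?m) z < \<rho> \<longrightarrow> \<bar>f z - f (xs ?m)\<bar> < 1/6" using near by blast
    have "\<forall>z. dist (xs ?m) z < \<rho> \<longrightarrow> f2 z \<ge> 1"
    proof (intro allI impI)
      fix z assume "dist (xs ?m) z < \<rho>"
      then have "\<bar>f z - 0\<bar> < 1/6" using \<rho>(2) osc by metis
      then have "f z - 0 < 1/6" unfolding abs_less_iff by linarith
      then have "(-6) * f z + 2 \<ge> 1" by linarith
      then show "f2 z \<ge> 1" unfolding f2_def using G(4) by simp
    qed
    moreover have "?m \<ge> N" using sg[rule_format, of "2*N"] by simp
    ultimately show "\<exists>m\<ge>N. \<exists>\<rho>>0. \<forall>z. dist (xs m) z < \<rho> \<longrightarrow> f2 z \<ge> 1" using \<rho>(1) by blast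
  qed
  have "\<forall>z. f1 z \<ge> 0" "\<forall>z. f2 z \<ge> 0" unfolding f1_def f2_def using G(1) by auto
  then show ?thesis using f1A f2A disj p1 p2 by blast
qed

lemma not_tb:
  fixes xs :: "nat \<Rightarrow> 'a::metric_space"
  assumes cpl: "complete (UNIV :: 'a set)"
    and nc: "\<forall>x. \<exists>r>0. \<exists>N. \<forall>m\<ge>N. dist x (xs m) \<ge> r"
  shows "\<exists>\<epsilon>>0. \<forall>K. finite K \<longrightarrow> (\<exists>m. \<forall>k\<in>K. dist k (xs m) \<ge> \<epsilon>)"
proof (rule ccontr)
  assume "\<not> ?thesis"
  then have tb: "\<forall>\<epsilon>>0. \<exists>K. finite K \<and> (\<forall>m. \<exists>k\<in>K. dist k (xs m) < \<epsilon>)"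
    by (meson not_le)
  let ?C = "closure (range xs)"
  have "compact ?C" unfolding compact_eq_totally_bounded
  proof (intro conjI allI impI)
    show "complete ?C" using complete_closed_subset[OF closed_closure _ cpl] by blast
  next
    fix \<epsilon> :: real assume \<epsilon>: "\<epsilon> > 0"
    then obtain K where K: "finite K" "\<forall>m. \<exists>k\<in>K. dist k (xs m) < \<epsilon>/2" using tb half_gt_zero by blast
    have "range xs \<subseteq> (\<Union>k\<in>K. cball k (\<epsilon>/2))"
    proof
      fix x assume "x \<in> range xs"
      then obtain m where m: "x = xs m" by blast
      obtain k where "k \<in> K" "dist k (xs m) < \<epsilon>/2" using K(2) by blast
      then have "x \<in> cball k (\<epsilon>/2)" using m by simp
      then show "x \<in> (\<Union>k\<in>K. cball k (\<epsilon>/2))" using \<open>k \<in> K\<close> by blast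
    qed
    moreover have "closed (\<Union>k\<in>K. cball k (\<epsilon>/2))" using K(1) by (intro closed_UN) auto
    ultimately have "?C \<subseteq> (\<Union>k\<in>K. cball k (\<epsilon>/2))" by (rule closure_minimal)
    also have "\<dots> \<subseteq> (\<Union>k\<in>K. ball k \<epsilon>)" using \<epsilon> by auto
    finally show "\<exists>k. finite k \<and> ?C \<subseteq> (\<Union>x\<in>k. ball x \<epsilon>)" using K(1) by blast
  qed
  then have "seq_compact ?C" by (rule compact_imp_seq_compact)
  moreover have "\<forall>n. xs n \<in> ?C" by (simp add: closure_subset[THEN subsetD])
  ultimately obtain l r where lr: "strict_mono (r :: nat \<Rightarrow> nat)" "(xs \<circ> r) \<longlonglongrightarrow> l"
    using seq_compactE by metis
  obtain \<delta> N where \<delta>: "\<delta> > 0" "\<forall>m\<ge>N. dist l (xs m) \<ge> \<delta>" using nc by blast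
  obtain n0 where n0: "\<forall>n\<ge>n0. dist ((xs \<circ> r) n) l < \<delta>" using lr(2) \<delta>(1) unfolding lim_sequentially by blast
  let ?n = "max n0 N"
  have "r ?n \<ge> N" using seq_suble[OF lr(1), of ?n] by simp
  then have "dist l (xs (r ?n)) \<ge> \<delta>" using \<delta>(2) by blast
  moreover have "dist (xs (r ?n)) l < \<delta>" using n0 by simp
  ultimately show False by (simp add: dist_commute)
qed


lemma sep_subseq:
  fixes xs :: "nat \<Rightarrow> 'a::metric_space"
  assumes "\<exists>\<epsilon>>0. \<forall>K. finite K \<longrightarrow> (\<exists>m. \<forall>k\<in>K. dist k (xs m) \<ge> \<epsilon>)"
  shows "\<exists>\<sigma>. (\<forall>j. j \<le> \<sigma> j) \<and> separated_seq (\<lambda>j. xs (\<sigma> j))"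
proof -
  obtain \<epsilon> where \<epsilon>: "\<epsilon> > 0" "\<forall>K. finite K \<longrightarrow> (\<exists>m. \<forall>k\<in>K. dist k (xs m) \<ge> \<epsilon>)" using assms by blast
  define pick where "pick K j = (SOME m. j \<le> m \<and> (\<forall>k\<in>K. dist k (xs m) \<ge> \<epsilon>))" for K j
  have pick: "j \<le> pick K j \<and> (\<forall>k\<in>K. dist k (xs (pick K j)) \<ge> \<epsilon>)" if K: "finite K" for K j
  proof -
    have "finite (K \<union> xs ` {..<j})" using K by simp
    then obtain m where m: "\<forall>k\<in>K \<union> xs ` {..<j}. dist k (xs m) \<ge> \<epsilon>" using \<epsilon>(2) by blast
    have "j \<le> m"
    proof (rule ccontr)
      assume "\<not> j \<le> m"
      then have "xs m \<in> K \<union> xs ` {..<j}" by auto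
      then have "dist (xs m) (xs m) \<ge> \<epsilon>" using m by blast
      then show False using \<epsilon>(1) by simp
    qed
    then have "\<exists>m. j \<le> m \<and> (\<forall>k\<in>K. dist k (xs m) \<ge> \<epsilon>)" using m by blast
    then show ?thesis unfolding pick_def by (rule someI_ex)
  qed
  define D where "D = rec_nat {} (\<lambda>j D. insert (xs (pick D j)) D)"
  have D0: "D 0 = {}" and DS: "D (Suc j) = insert (xs (pick (D j) j)) (D j)" for j
    by (simp_all add: D_def)
  define \<sigma> where "\<sigma> j = pick (D j) j" for j
  have Dfin: "finite (D j)" for j by (induction j) (simp_all add: D0 DS)
  have Deq: "D j = (\<lambda>i. xs (\<sigma> i)) ` {..<j}" for j
    by (induction j) (simp_all add: D0 DS \<sigma>_def lessThan_Suc)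
  have sg: "j \<le> \<sigma> j" for j using pick[OF Dfin] by (simp add: \<sigma>_def)
  have sep: "dist (xs (\<sigma> i)) (xs (\<sigma> j)) \<ge> \<epsilon>" if "i < j" for i j
  proof -
    have "xs (\<sigma> i) \<in> D j" using Deq that by auto
    then show ?thesis using pick[OF Dfin, of j j] by (simp add: \<sigma>_def)
  qed
  have "separated_seq (\<lambda>j. xs (\<sigma> j))" unfolding separated_seq_def
  proof (intro exI[of _ \<epsilon>] conjI allI impI)
    fix m n :: nat assume "m \<noteq> n"
    then show "\<epsilon> \<le> dist (xs (\<sigma> m)) (xs (\<sigma> n))"
      using sep[of m n] sep[of n m] by (cases "m < n") (auto simp: dist_commute)
  qed (use \<epsilon> in auto)
  then show ?thesis using sg by blast
qed

lemma osc_b: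
  fixes A :: "('a::metric_space \<Rightarrow> real) set" and xs :: "nat \<Rightarrow> 'a"
  assumes A: "adequate A" and cpl: "complete (UNIV :: 'a set)"
    and hyp: "\<forall>x. separated_seq x \<longrightarrow> (\<exists>f\<in>A. \<forall>m. f (x (2*m+1)) = 1 \<and> f (x (2*m)) = 0)"
    and nc: "\<forall>x. \<exists>r>0. \<exists>N. \<forall>m\<ge>N. dist x (xs m) \<ge> r"
  shows "\<exists>f1\<in>A. \<exists>f2\<in>A. (\<forall>z. f1 z \<ge> 0) \<and> (\<forall>z. f2 z \<ge> 0) \<and> (\<forall>z. f1 z = 0 \<or> f2 z = 0) \<and>
    (\<forall>N. \<exists>m\<ge>N. \<exists>\<rho>>0. \<forall>z. dist (xs m) z < \<rho> \<longrightarrow> f1 z \<ge> 1) \<and>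
    (\<forall>N. \<exists>m\<ge>N. \<exists>\<rho>>0. \<forall>z. dist (xs m) z < \<rho> \<longrightarrow> f2 z \<ge> 1)"
proof -
  obtain \<sigma> :: "nat \<Rightarrow> nat" where \<sigma>: "\<forall>j. j \<le> \<sigma> j" "separated_seq (\<lambda>j. xs (\<sigma> j))"
    using sep_subseq[OF not_tb[OF cpl nc]] by blast
  obtain f where f: "f \<in> A" "\<forall>m. f (xs (\<sigma> (2*m+1))) = 1 \<and> f (xs (\<sigma> (2*m))) = 0"
    using hyp \<sigma>(2) by blast
  show ?thesis using osc_from_f[OF A f \<sigma>(1)] .
qed


lemma adq_sum: assumes A: "adequate A" shows "finite I \<Longrightarrow> (\<forall>i\<in>I. b i \<in> A) \<Longrightarrow> (\<lambda>z. \<Sum>i\<in>I. b i z) \<in> A"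
proof (induction I rule: finite_induct)
  case empty then show ?case using adq_zero[OF A] by simp
next
  case (insert i I)
  then have "(\<lambda>z. b i z + (\<Sum>i\<in>I. b i z)) \<in> A" using adq_add[OF A] by blast
  then show ?case using insert(1,2) by simp
qed

lemma osc_a:
  fixes A :: "('a::metric_space \<Rightarrow> real) set" and xs :: "nat \<Rightarrow> 'a"
  assumes A: "adequate A" and L: "A = loc_space A \<or> A = bounded_part (loc_space A)"
    and nc: "\<forall>x. \<exists>r>0. \<exists>N. \<forall>m\<ge>N. dist x (xs m) \<ge> r"
  shows "\<exists>\<sigma> f. f \<in> A \<and> (\<forall>m. f (xs (\<sigma> (2*m+1))) = 1 \<and> f (xs (\<sigma> (2*m))) = 0) \<and> (\<forall>j::nat. j \<le> \<sigma> j)"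
proof -
  obtain G :: "real \<Rightarrow> real" where G: "\<And>t. 0 \<le> G t" "\<And>t. G t \<le> 1"
    "\<And>t. t \<le> 0 \<Longrightarrow> G t = 0" "\<And>t. t \<ge> 1 \<Longrightarrow> G t = 1"
    "\<And>f. f \<in> A \<Longrightarrow> (\<lambda>x. G (f x)) \<in> A" using adq_G[OF A] by metis
  obtain r N where rN: "\<And>x. r x > 0" "\<And>x m. m \<ge> N x \<Longrightarrow> dist x (xs m) \<ge> r x"
    using nc by metis
  define P where "P = rec_nat (0::nat, max 1 (N (xs 0))) (\<lambda>j p. (snd p, max (snd p + 1) (N (xs (snd p)))))"
  define \<sigma> where "\<sigma> j = fst (P j)" for j
  define M where "M j = snd (P j)" for j
  have \<sigma>0: "\<sigma> 0 = 0" and M0: "M 0 = max 1 (N (xs 0))"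
    and \<sigma>S: "\<sigma> (Suc j) = M j" and MS: "M (Suc j) = max (M j + 1) (N (xs (M j)))" for j
    by (simp_all add: \<sigma>_def M_def P_def)
  have inv1: "\<sigma> j < M j" for j by (induction j) (simp_all add: \<sigma>0 M0 \<sigma>S MS)
  have inv2: "N (xs (\<sigma> j)) \<le> M j" for j by (induction j) (simp_all add: \<sigma>0 M0 \<sigma>S MS)
  have Mmono: "M i \<le> M j" if "i \<le> j" for i j
    using lift_Suc_mono_le[of M, OF _ that] MS by simp
  have "strict_mono \<sigma>" unfolding strict_mono_Suc_iff using inv1 \<sigma>S by simp
  then have sg: "j \<le> \<sigma> j" for j using seq_suble by blast
  have farN: "N (xs (\<sigma> i)) \<le> \<sigma> j" if ij: "i < j" for i j
  proof -
    obtain k where k: "j = Suc (i + k)" using less_imp_Suc_add[OF ij] by blast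
    define j' where "j' = i + k"
    have j': "j = Suc j'" using k j'_def by simp
    have "M i \<le> M j'" using Mmono j'_def by simp
    then show ?thesis using inv2[of i] \<sigma>S j' by simp
  qed
  have far: "dist (xs (\<sigma> i)) (xs (\<sigma> j)) \<ge> r (xs (\<sigma> i))" if "i < j" for i j
    using rN(2)[OF farN[OF that]] .
  define \<rho> where "\<rho> j = Min ((\<lambda>i. min (r (xs (\<sigma> i)) / 2) (1/(real i+1))) ` {..j})" for j
  have \<rho>pos: "\<rho> j > 0" for j unfolding \<rho>_def using rN(1) by (subst Min_gr_iff) auto
  have \<rho>le: "\<rho> j \<le> r (xs (\<sigma> i)) / 2 \<and> \<rho> j \<le> 1/(real i+1)" if "i \<le> j" for i j
  proof -
    have "\<rho> j \<le> min (r (xs (\<sigma> i)) / 2) (1/(real i+1))" unfolding \<rho>_def using that by (intro Min_le) auto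
    then show ?thesis by simp
  qed
  have disj: "\<not> (dist (xs (\<sigma> i)) z < \<rho> i \<and> dist (xs (\<sigma> j)) z < \<rho> j)" if "i \<noteq> j" for i j z
  proof
    assume a: "dist (xs (\<sigma> i)) z < \<rho> i \<and> dist (xs (\<sigma> j)) z < \<rho> j"
    have tri: "dist (xs (\<sigma> i)) (xs (\<sigma> j)) \<le> dist (xs (\<sigma> i)) z + dist (xs (\<sigma> j)) z"
      using dist_triangle[of "xs (\<sigma> i)" "xs (\<sigma> j)" z] by (simp add: dist_commute)
    show False
    proof (cases "i < j")
      case True
      have "\<rho> i \<le> r (xs (\<sigma> i)) / 2" "\<rho> j \<le> r (xs (\<sigma> i)) / 2" using \<rho>le[of i i] \<rho>le[of i j] True by auto
      then show False using far[OF True] tri a by linarith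
    next
      case False
      then have ji: "j < i" using that by simp
      have "\<rho> j \<le> r (xs (\<sigma> j)) / 2" "\<rho> i \<le> r (xs (\<sigma> j)) / 2" using \<rho>le[of j j] \<rho>le[of j i] ji by auto
      then show False using far[OF ji] tri a by (simp add: dist_commute)
    qed
  qed
  have "\<forall>j. \<exists>b\<in>A. (\<forall>z. 0 \<le> b z \<and> b z \<le> 1) \<and> b (xs (\<sigma> j)) = 1 \<and> (\<forall>z. z \<notin> ball (xs (\<sigma> j)) (\<rho> j) \<longrightarrow> b z = 0)"
  proof
    fix j
    have "xs (\<sigma> j) \<in> ball (xs (\<sigma> j)) (\<rho> j)" using \<rho>pos by simp
    then show "\<exists>b\<in>A. (\<forall>z. 0 \<le> b z \<and> b z \<le> 1) \<and> b (xs (\<sigma> j)) = 1 \<and> (\<forall>z. z \<notin> ball (xs (\<sigma> j)) (\<rho> j) \<longrightarrow> b z = 0)"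
      using adq_bump[OF A open_ball] by blast
  qed
  then obtain b where b: "\<And>j. b j \<in> A" "\<And>j z. 0 \<le> b j z" "\<And>j z. b j z \<le> 1" "\<And>j. b j (xs (\<sigma> j)) = 1"
    "\<And>j z. dist (xs (\<sigma> j)) z \<ge> \<rho> j \<Longrightarrow> b j z = 0"
    by (metis mem_ball not_le)
  have LF: "\<exists>\<delta>>0. \<exists>J. \<forall>z. dist z0 z < \<delta> \<longrightarrow> (\<forall>j. b j z \<noteq> 0 \<longrightarrow> j < J)" for z0
  proof -
    have "r z0 / 2 > 0" using rN(1) by simp
    then obtain J0 :: nat where "inverse (real (Suc J0)) < r z0 / 2" using reals_Archimedean by blast
    then have J0: "1 / (real J0 + 1) < r z0 / 2" by (simp add: inverse_eq_divide add.commute)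
    define J where "J = max J0 (N z0)"
    have "\<forall>z. dist z0 z < r z0 / 2 \<longrightarrow> (\<forall>j. b j z \<noteq> 0 \<longrightarrow> j < J)"
    proof (intro allI impI)
      fix z j assume z: "dist z0 z < r z0 / 2" and bz: "b j z \<noteq> 0"
      show "j < J"
      proof (rule ccontr)
        assume "\<not> j < J"
        then have jJ: "J0 \<le> j" "N z0 \<le> \<sigma> j" using sg[of j] by (auto simp: J_def)
        have d1: "dist z0 (xs (\<sigma> j)) \<ge> r z0" using rN(2)[OF jJ(2)] .
        have "dist (xs (\<sigma> j)) z < \<rho> j" using bz b(5) by (meson not_le)
        also have "\<rho> j \<le> 1/(real j+1)" using \<rho>le[of j j] by simp
        also have "1/(real j+1) \<le> 1/(real J0+1)" using jJ(1) by (simp add: frac_le)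
        finally have "dist (xs (\<sigma> j)) z < r z0 / 2" using J0 by linarith
        moreover have "dist z0 (xs (\<sigma> j)) \<le> dist z0 z + dist (xs (\<sigma> j)) z"
          using dist_triangle[of z0 "xs (\<sigma> j)" z] by (simp add: dist_commute)
        ultimately show False using z d1 by linarith
      qed
    qed
    then show ?thesis using \<open>r z0 / 2 > 0\<close> by blast
  qed
  define F where "F z = (\<Sum>j\<in>{j. odd j \<and> b j z \<noteq> 0}. b j z)" for z
  define H where "H z = G (2 * F z)" for z
  have Hloc: "H \<in> loc_space A" unfolding loc_space_def
  proof (intro CollectI allI)
    fix z0
    obtain \<delta> J where \<delta>: "\<delta> > 0" "\<forall>z. dist z0 z < \<delta> \<longrightarrow> (\<forall>j. b j z \<noteq> 0 \<longrightarrow> j < J)" using LF by blast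
    let ?g = "\<lambda>z. G (2 * (\<Sum>j\<in>{j. j < J \<and> odd j}. b j z))"
    have "finite {j. j < J \<and> odd j}" by simp
    then have "(\<lambda>z. \<Sum>j\<in>{j. j < J \<and> odd j}. b j z) \<in> A" using adq_sum[OF A, of "{j. j < J \<and> odd j}" b] b(1) by blast
    then have gA: "?g \<in> A" using G(5)[OF adq_scale[OF A]] by blast
    have "\<forall>z\<in>ball z0 \<delta>. H z = ?g z"
    proof
      fix z assume "z \<in> ball z0 \<delta>"
      then have sub: "{j. odd j \<and> b j z \<noteq> 0} \<subseteq> {j. j < J \<and> odd j}" using \<delta>(2) by auto
      have "F z = (\<Sum>j\<in>{j. j < J \<and> odd j}. b j z)" unfolding F_def
        by (rule sum.mono_neutral_left) (use sub in auto)
      then show "H z = ?g z" by (simp add: H_def)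
    qed
    then show "\<exists>U. open U \<and> z0 \<in> U \<and> (\<exists>g\<in>A. \<forall>x\<in>U. H x = g x)" using \<delta>(1) gA
      by (intro exI[of _ "ball z0 \<delta>"]) auto
  qed
  have Hb: "bounded (range H)" unfolding bounded_iff H_def using G(1,2)
    by (intro exI[of _ 1]) auto
  have HA: "H \<in> A" using L Hloc Hb unfolding bounded_part_def by blast
  have fin: "finite {j. odd j \<and> b j z \<noteq> 0}" for z
  proof -
    obtain \<delta> J where dJ: "\<delta> > 0" "\<forall>z'. dist z z' < \<delta> \<longrightarrow> (\<forall>j. b j z' \<noteq> 0 \<longrightarrow> j < J)" using LF by blast
    have "dist z z < \<delta>" using dJ(1) by simp
    then have "\<forall>j. b j z \<noteq> 0 \<longrightarrow> j < J" using dJ(2) by blast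
    then have "{j. odd j \<and> b j z \<noteq> 0} \<subseteq> {..<J}" by auto
    then show ?thesis using finite_subset by blast
  qed
  have H1: "H (xs (\<sigma> (2*m+1))) = 1" for m
  proof -
    let ?j = "2*m+1" and ?z = "xs (\<sigma> (2*m+1))"
    have "?j \<in> {j. odd j \<and> b j ?z \<noteq> 0}" using b(4) by simp
    then have "b ?j ?z \<le> F ?z" unfolding F_def using fin b(2) by (intro member_le_sum) auto
    then have "2 * F ?z \<ge> 1" using b(4) by simp
    then show ?thesis unfolding H_def using G(4) by simp
  qed
  have H0: "H (xs (\<sigma> (2*m))) = 0" for m
  proof -
    let ?z = "xs (\<sigma> (2*m))"
    have "b j ?z = 0" if "odd j" for j
    proof -
      have "j \<noteq> 2*m" using that by auto
      then have "\<not> (dist (xs (\<sigma> j)) ?z < \<rho> j)" using disj[of j "2*m" ?z] \<rho>pos[of "2*m"] by auto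
      then show ?thesis using b(5) by simp
    qed
    then have E: "{j. odd j \<and> b j ?z \<noteq> 0} = {}" by auto
    have "F ?z = 0" unfolding F_def E by simp
    then show ?thesis unfolding H_def using G(3) by simp
  qed
  show ?thesis using HA H1 H0 sg by blast
qed

lemma osc:
  fixes A :: "('a::metric_space \<Rightarrow> real) set" and xs :: "nat \<Rightarrow> 'a"
  assumes A: "adequate A" and C: "cond_a_or_b A"
    and nc: "\<forall>x. \<exists>r>0. \<exists>N. \<forall>m\<ge>N. dist x (xs m) \<ge> r"
  shows "\<exists>f1\<in>A. \<exists>f2\<in>A. (\<forall>z. f1 z \<ge> 0) \<and> (\<forall>z. f2 z \<ge> 0) \<and> (\<forall>z. f1 z = 0 \<or> f2 z = 0) \<and>
    (\<forall>N. \<exists>m\<ge>N. \<exists>\<rho>>0. \<forall>z. dist (xs m) z < \<rho> \<longrightarrow> f1 z \<ge> 1) \<and>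
    (\<forall>N. \<exists>m\<ge>N. \<exists>\<rho>>0. \<forall>z. dist (xs m) z < \<rho> \<longrightarrow> f2 z \<ge> 1)"
proof -
  have "(A = loc_space A \<or> A = bounded_part (loc_space A)) \<or>
     (complete (UNIV :: 'a set) \<and> (\<forall>x. separated_seq x \<longrightarrow> (\<exists>f\<in>A. \<forall>m. f (x (2*m+1)) = 1 \<and> f (x (2*m)) = 0)))"
    using C unfolding cond_a_or_b_def .
  then show ?thesis
  proof
    assume L: "A = loc_space A \<or> A = bounded_part (loc_space A)"
    obtain \<sigma> :: "nat \<Rightarrow> nat" and f where f: "f \<in> A" "\<forall>m. f (xs (\<sigma> (2*m+1))) = 1 \<and> f (xs (\<sigma> (2*m))) = 0"
      "\<forall>j. j \<le> \<sigma> j" using osc_a[OF A L nc] by blast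
    show ?thesis using osc_from_f[OF A f] .
  next
    assume "complete (UNIV :: 'a set) \<and> (\<forall>x. separated_seq x \<longrightarrow> (\<exists>f\<in>A. \<forall>m. f (x (2*m+1)) = 1 \<and> f (x (2*m)) = 0))"
    then show ?thesis using osc_b[OF A _ _ nc] by blast
  qed
qed

locale OI =
  fixes AX :: "('a::metric_space \<Rightarrow> real) set" and AY :: "('b::metric_space \<Rightarrow> real) set"
    and T :: "('a \<Rightarrow> real) \<Rightarrow> ('b \<Rightarrow> real)"
  assumes AX: "adequate AX" and AY: "adequate AY" and T: "order_iso AX AY T"
    and Tb: "T ` bounded_part AX = bounded_part AY"
begin

abbreviation e where "e \<equiv> T (\<lambda>_. 1)"

lemma e_in: "e \<in> AY" using oi_in[OF T adq_const[OF AX]] .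

lemma e_nonneg: "e y \<ge> 0"
  using oi_pos[OF T adq_const[OF AX, of 1]] by simp

lemma Tconst: "T (\<lambda>_. c) = (\<lambda>y. c * e y)" using oi_const[OF AX T] .

lemma Tdiff: "f \<in> AX \<Longrightarrow> g \<in> AX \<Longrightarrow> T (\<lambda>x. f x - g x) = (\<lambda>y. T f y - T g y)"
  using oi_diff[OF AX T] by blast

lemma Tmono: "f \<in> AX \<Longrightarrow> g \<in> AX \<Longrightarrow> (\<forall>x. f x \<le> g x) \<longleftrightarrow> (\<forall>y. T f y \<le> T g y)"
  using oi_mono[OF AX T] by blast

lemma Tpos: "f \<in> AX \<Longrightarrow> (\<forall>x. f x \<ge> 0) \<longleftrightarrow> (\<forall>y. T f y \<ge> 0)"
  using oi_pos[OF T] by blast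

lemma Tcont: "f \<in> AX \<Longrightarrow> continuous_on UNIV (T f)"
  using adq_cont[OF AY] oi_in[OF T] by blast

lemma bdd_range01: "\<forall>z. 0 \<le> b z \<and> b z \<le> (1::real) \<Longrightarrow> bounded (range b)"
  unfolding bounded_iff by (rule exI[of _ 1]) auto

lemma e_pos: "e y > 0"
proof -
  obtain g where g: "g \<in> AY" "\<forall>z. 0 \<le> g z \<and> g z \<le> 1" "g y = 1"
    using adq_bump[OF AY, of UNIV y] by auto
  have "g \<in> bounded_part AY" using g bdd_range01 by (auto simp: bounded_part_def)
  then obtain f where f: "f \<in> bounded_part AX" "T f = g" using Tb by (metis imageE)
  then have fA: "f \<in> AX" and "bounded (range f)" by (auto simp: bounded_part_def)
  then obtain M where M: "\<forall>x. norm (f x) \<le> M" unfolding bounded_iff by auto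
  have "\<forall>x. f x \<le> M" using M by (metis abs_le_D1 real_norm_def)
  then have "\<forall>y. T f y \<le> T (\<lambda>_. M) y" using Tmono[OF fA adq_const[OF AX]] by simp
  then have "1 \<le> M * e y" using f(2) g(3) Tconst by metis
  then show ?thesis using e_nonneg[of y]
    by (metis less_eq_real_def mult_zero_right not_one_le_zero)
qed

text \<open>Support containment (uses disjointness in both directions).\<close>
lemma supp_cont:
  assumes u: "u \<in> AX" "\<forall>z. u z \<ge> 0" and a: "a \<in> AX" "\<forall>z. a z \<ge> 0" "\<forall>z. a z \<noteq> 0 \<longrightarrow> u z \<noteq> 0"
    and r: "r > 0" "\<forall>z. dist y' z < r \<longrightarrow> T u z = 0"
  shows "T a y' = 0"
proof -
  obtain b where b: "b \<in> AY" "\<forall>z. 0 \<le> b z \<and> b z \<le> 1" "b y' = 1" "\<forall>z. z \<notin> ball y' r \<longrightarrow> b z = 0"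
    using adq_bump[OF AY, of "ball y' r" y'] r by auto
  obtain v where v: "v \<in> AX" "T v = b" using oi_surj[OF T b(1)] by blast
  let ?S = "inv_into AX T"
  have S: "order_iso AY AX ?S" using oi_inv[OF T AX] .
  have inj: "inj_on T AX" using T oi_bij bij_betw_def by blast
  have Tu0: "\<forall>z. T u z \<ge> 0" using Tpos u by blast
  have dj: "\<forall>z. b z = 0 \<or> T u z = 0" using b(4) r(2) by auto
  have "?S b x = 0 \<or> ?S (T u) x = 0" for x
    using oi_disj[OF AY AX S b(1) _ oi_in[OF T u(1)] Tu0 dj] b(2) by blast
  then have vu: "\<forall>x. v x = 0 \<or> u x = 0" using v u(1) inj by (metis inv_into_f_f)
  have v0: "\<forall>x. v x \<ge> 0" using Tpos[OF v(1)] v(2) b(2) by simp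
  have "\<forall>x. v x = 0 \<or> a x = 0" using vu a(3) by metis
  then have "T v y' = 0 \<or> T a y' = 0" using oi_disj[OF AX AY T v(1) v0 a(1) a(2)] by blast
  then show ?thesis using v(2) b(3) by simp
qed

definition supp_pt where
  "supp_pt x y \<longleftrightarrow> (\<forall>r>0. \<exists>f\<in>AX. (\<forall>z. f z \<ge> 0) \<and> (\<forall>z. dist x z \<ge> r \<longrightarrow> f z = 0) \<and> T f y > 0)"

lemma key_claim:
  assumes u: "u \<in> AX" "\<forall>z. u z \<ge> 0" "u x0 > 0" "\<forall>z. dist y z \<ge> \<rho> \<longrightarrow> T u z = 0"
    and f: "f \<in> AX" "\<forall>z. f z \<ge> 0" and W: "open W" "x0 \<in> W" "\<forall>z\<in>W. f z \<ge> 1"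
  shows "\<exists>y'. dist y y' \<le> \<rho> \<and> T f y' > e y' / 2"
proof -
  let ?V = "W \<inter> {z. 0 < u z}"
  have oV: "open ?V" using open_Int[OF W(1) open_gt[OF adq_cont[OF AX u(1)]]] .
  have xV: "x0 \<in> ?V" using W(2) u(3) by blast
  obtain a where a: "a \<in> AX" "\<forall>z. 0 \<le> a z \<and> a z \<le> 1" "a x0 = 1" "\<forall>z. z \<notin> ?V \<longrightarrow> a z = 0"
    using adq_bump[OF AX oV xV] by blast
  have af: "\<forall>z. a z \<le> f z"
  proof
    fix z show "a z \<le> f z"
    proof (cases "z \<in> ?V")
      case True
      then have "f z \<ge> 1" using W(3) by blast
      moreover have "a z \<le> 1" using a(2) by blast
      ultimately show ?thesis by linarith
    next
      case False then show ?thesis using a(4) f(2) by simp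
    qed
  qed
  have Taf: "\<forall>y. T a y \<le> T f y" using Tmono[OF a(1) f(1)] af by blast
  show ?thesis
  proof (rule ccontr)
    assume nc: "\<not> ?thesis"
    have "T a y' \<le> T (\<lambda>_. 1/2) y'" for y'
    proof (cases "dist y y' \<le> \<rho>")
      case True
      have "\<not> (dist y y' \<le> \<rho> \<and> e y' / 2 < T f y')" using nc by blast
      then have "T f y' \<le> e y' / 2" using True by linarith
      moreover have "T a y' \<le> T f y'" using Taf by blast
      ultimately show ?thesis using Tconst[of "1/2"] by simp
    next
      case False
      define r where "r = dist y y' - \<rho>"
      have r: "r > 0" using False by (simp add: r_def)
      have "\<forall>z. dist y' z < r \<longrightarrow> T u z = 0"
      proof (intro allI impI)
        fix z assume "dist y' z < r"
        moreover have "dist y y' \<le> dist y z + dist y' z" using dist_triangle3[of y y' z] by (simp add: dist_commute)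
        ultimately have "dist y z \<ge> \<rho>" unfolding r_def by linarith
        then show "T u z = 0" using u(4) by blast
      qed
      moreover have "\<forall>z. a z \<ge> 0" using a(2) by auto
      moreover have "\<forall>z. a z \<noteq> 0 \<longrightarrow> u z \<noteq> 0" using a(4) by force
      ultimately have "T a y' = 0"
        using supp_cont[OF u(1) u(2) a(1) _ _ r] by blast
      then show ?thesis using Tconst[of "1/2"] e_nonneg[of y'] by simp
    qed
    then have "\<forall>x. a x \<le> 1/2" using Tmono[OF a(1) adq_const[OF AX, of "1/2"]] by simp
    then have "a x0 \<le> 1/2" by blast
    then show False using a(3) by simp
  qed
qed

lemma exists_supp:
  assumes C: "cond_a_or_b AX"
  shows "\<exists>x. supp_pt x y"
proof (rule ccontr)
  assume nosupp: "\<not> (\<exists>x. supp_pt x y)"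
  have "\<exists>u x. u \<in> AX \<and> (\<forall>z. u z \<ge> 0) \<and> u x > 0 \<and> (\<forall>z. dist y z \<ge> 1/(real m+1) \<longrightarrow> T u z = 0)" for m
  proof -
    have "(1::real)/(real m+1) > 0" by simp
    then obtain g where g: "g \<in> AY" "\<forall>z. 0 \<le> g z \<and> g z \<le> 1" "g y = 1"
        "\<forall>z. z \<notin> ball y (1/(real m+1)) \<longrightarrow> g z = 0"
      using adq_bump[OF AY, of "ball y (1/(real m+1))" y] by auto
    obtain u where u: "u \<in> AX" "T u = g" using oi_surj[OF T g(1)] by blast
    have u0: "\<forall>z. u z \<ge> 0" using Tpos[OF u(1)] u(2) g(2) by simp
    have "\<exists>x. u x \<noteq> 0"
    proof (rule ccontr)
      assume "\<not> (\<exists>x. u x \<noteq> 0)"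
      then have "u = (\<lambda>_. 0)" by auto
      then have "T u = (\<lambda>_. 0)" using oi_zero[OF AX T] by simp
      then show False using u(2) g(3) by (metis zero_neq_one)
    qed
    then obtain x where "u x > 0" using u0 by (metis less_eq_real_def)
    moreover have "\<forall>z. dist y z \<ge> 1/(real m+1) \<longrightarrow> T u z = 0" using g(4) u(2) by simp
    ultimately show ?thesis using u u0 by blast
  qed
  then have "\<forall>m. \<exists>p. fst p \<in> AX \<and> (\<forall>z. fst p z \<ge> 0) \<and> fst p (snd p) > 0 \<and> (\<forall>z. dist y z \<ge> 1/(real m+1) \<longrightarrow> T (fst p) z = 0)"
    by simp
  from choice[OF this] obtain F where F: "\<forall>m. fst (F m) \<in> AX \<and> (\<forall>z. fst (F m) z \<ge> 0) \<and> fst (F m) (snd (F m)) > 0 \<and> (\<forall>z. dist y z \<ge> 1/(real m+1) \<longrightarrow> T (fst (F m)) z = 0)"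
    by blast
  define u where "u m = fst (F m)" for m
  define xs where "xs m = snd (F m)" for m
  have uxs: "\<And>m. u m \<in> AX" "\<And>m z. u m z \<ge> 0" "\<And>m. u m (xs m) > 0"
      "\<And>m z. dist y z \<ge> 1/(real m+1) \<Longrightarrow> T (u m) z = 0"
    using F by (auto simp: u_def xs_def)
  have K: "\<exists>y'. dist y y' \<le> 1/(real m+1) \<and> T f y' > e y' / 2"
    if f: "f \<in> AX" "\<forall>z. f z \<ge> 0" and W: "open W" "xs m \<in> W" "\<forall>z\<in>W. f z \<ge> 1" for m f W
    using key_claim[OF uxs(1)[of m] _ uxs(3)[of m] _ f W] uxs(2,4) by blast
  have LC: "T f y \<ge> e y / 2"
    if f: "f \<in> AX" "\<forall>z. f z \<ge> 0" and inf: "\<forall>N. \<exists>m\<ge>N. \<exists>\<rho>>0. \<forall>z. dist (xs m) z < \<rho> \<longrightarrow> f z \<ge> 1" for f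
  proof (rule ccontr)
    assume "\<not> ?thesis"
    then have neg: "T f y - e y / 2 < 0" by simp
    have "continuous_on UNIV (\<lambda>y. T f y - e y / 2)"
      using Tcont[OF f(1)] Tcont[OF adq_const[OF AX]] by (intro continuous_intros) auto
    then have "\<forall>\<epsilon>>0. \<exists>d>0. \<forall>y'\<in>UNIV. dist y' y < d \<longrightarrow> dist (T f y' - e y' / 2) (T f y - e y / 2) < \<epsilon>"
      unfolding continuous_on_iff by blast
    moreover have "- (T f y - e y / 2) > 0" using neg by simp
    ultimately obtain \<delta> where \<delta>: "\<delta> > 0" "\<forall>y'. dist y' y < \<delta> \<longrightarrow> dist (T f y' - e y' / 2) (T f y - e y / 2) < - (T f y - e y / 2)"
      by blast
    obtain N :: nat where "inverse (real (Suc N)) < \<delta>" using reals_Archimedean[OF \<delta>(1)] by blast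
    then have N: "1 / (real N + 1) < \<delta>" by (simp add: inverse_eq_divide add.commute)
    obtain m \<rho> where m: "m \<ge> N" "\<rho> > 0" "\<forall>z. dist (xs m) z < \<rho> \<longrightarrow> f z \<ge> 1" using inf by blast
    have "open (ball (xs m) \<rho>)" "xs m \<in> ball (xs m) \<rho>" "\<forall>z\<in>ball (xs m) \<rho>. f z \<ge> 1" using m by auto
    then obtain y' where y': "dist y y' \<le> 1/(real m+1)" "T f y' > e y' / 2" using K[OF f] by blast
    have "1/(real m+1) \<le> 1/(real N+1)" using m(1) by (simp add: frac_le)
    then have "dist y' y < \<delta>" using y'(1) N by (simp add: dist_commute)
    then have "dist (T f y' - e y' / 2) (T f y - e y / 2) < - (T f y - e y / 2)" using \<delta> by blast
    then show False using y'(2) neg by (simp add: dist_real_def abs_if split: if_splits)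
  qed
  show False
  proof (cases "\<exists>x. \<forall>r>0. \<forall>N. \<exists>m\<ge>N. dist x (xs m) < r")
    case True
    then obtain x where x: "\<forall>r>0. \<forall>N. \<exists>m\<ge>N. dist x (xs m) < r" by blast
    have "supp_pt x y" unfolding supp_pt_def
    proof (intro allI impI)
      fix r :: real assume r: "r > 0"
      obtain b s where b: "b \<in> AX" "\<forall>z. 0 \<le> b z \<and> b z \<le> 1" "\<forall>z. z \<notin> ball x r \<longrightarrow> b z = 0"
          "s > 0" "\<forall>z. dist x z < s \<longrightarrow> b z = 1"
        using adq_bump[OF AX, of "ball x r" x] r by auto
      have "\<forall>N. \<exists>m\<ge>N. \<exists>\<rho>>0. \<forall>z. dist (xs m) z < \<rho> \<longrightarrow> b z \<ge> 1"
      proof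
        fix N obtain m where m: "m \<ge> N" "dist x (xs m) < s" using x b(4) by blast
        have "\<forall>z. dist (xs m) z < s - dist x (xs m) \<longrightarrow> b z \<ge> 1"
        proof (intro allI impI)
          fix z assume "dist (xs m) z < s - dist x (xs m)"
          then have "dist x z < s" using dist_triangle[of x z "xs m"] by linarith
          then show "b z \<ge> 1" using b(5) by simp
        qed
        moreover have "s - dist x (xs m) > 0" using m by simp
        ultimately show "\<exists>m\<ge>N. \<exists>\<rho>>0. \<forall>z. dist (xs m) z < \<rho> \<longrightarrow> b z \<ge> 1" using m(1) by blast
      qed
      then have "T b y \<ge> e y / 2" using LC[OF b(1)] b(2) by blast
      then have "T b y > 0" using e_pos[of y] by linarith
      moreover have "\<forall>z. dist x z \<ge> r \<longrightarrow> b z = 0" using b(3) by auto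
      ultimately show "\<exists>f\<in>AX. (\<forall>z. f z \<ge> 0) \<and> (\<forall>z. dist x z \<ge> r \<longrightarrow> f z = 0) \<and> T f y > 0"
        using b(1,2) by blast
    qed
    then show False using nosupp by blast
  next
    case False
    then have nc: "\<forall>x. \<exists>r>0. \<exists>N. \<forall>m\<ge>N. dist x (xs m) \<ge> r" by (meson not_le)
    obtain f1 f2 where f: "f1 \<in> AX" "f2 \<in> AX" "\<forall>z. f1 z \<ge> 0" "\<forall>z. f2 z \<ge> 0" "\<forall>z. f1 z = 0 \<or> f2 z = 0"
      "\<forall>N. \<exists>m\<ge>N. \<exists>\<rho>>0. \<forall>z. dist (xs m) z < \<rho> \<longrightarrow> f1 z \<ge> 1"
      "\<forall>N. \<exists>m\<ge>N. \<exists>\<rho>>0. \<forall>z. dist (xs m) z < \<rho> \<longrightarrow> f2 z \<ge> 1"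
      using osc[OF AX C nc] by blast
    have "T f1 y > 0" "T f2 y > 0" using LC[OF f(1) f(3) f(6)] LC[OF f(2) f(4) f(7)] e_pos[of y] by linarith+
    then show False using oi_disj[OF AX AY T f(1) f(3) f(2) f(4) f(5), of y] by simp
  qed
qed

lemma bpI: "b \<in> AX \<Longrightarrow> \<forall>z. \<bar>b z\<bar> \<le> K \<Longrightarrow> b \<in> bounded_part AX"
  unfolding bounded_part_def bounded_iff by auto

lemma supp_zero:
  assumes S: "supp_pt x y" and p: "p \<in> AX" "\<forall>z. p z \<ge> 0" and r: "r > 0" "\<forall>z. dist x z < r \<longrightarrow> p z = 0"
  shows "T p y = 0"
proof -
  obtain f where f: "f \<in> AX" "\<forall>z. f z \<ge> 0" "\<forall>z. dist x z \<ge> r \<longrightarrow> f z = 0" "T f y > 0"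
    using S r(1) unfolding supp_pt_def by blast
  have "\<forall>z. p z = 0 \<or> f z = 0" using r(2) f(3) by (meson not_le)
  then have "T p y = 0 \<or> T f y = 0" using oi_disj[OF AX AY T p f(1,2)] by blast
  then show ?thesis using f(4) by simp
qed

lemma supp_ub:
  assumes S: "supp_pt x y" and w: "w \<in> AX" "w x < 0" "\<forall>z. w z \<le> M"
  shows "T w y \<le> 0"
proof -
  obtain G :: "real \<Rightarrow> real" where G: "\<And>t. 0 \<le> G t" "\<And>t. G t \<le> 1"
    "\<And>t. t \<le> 0 \<Longrightarrow> G t = 0" "\<And>t. t \<ge> 1 \<Longrightarrow> G t = 1"
    "\<And>f. f \<in> AX \<Longrightarrow> (\<lambda>x. G (f x)) \<in> AX" using adq_G[OF AX] by metis
  have cw: "continuous_on UNIV w" using adq_cont[OF AX w(1)] .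
  have "closed {z. (\<lambda>_. 0) z \<le> w z}" using closed_Collect_le[OF continuous_on_const cw] .
  then have cF: "closed {z. 0 \<le> w z}" by simp
  have "x \<notin> {z. 0 \<le> w z}" using w(2) by simp
  then obtain \<phi> where \<phi>: "\<phi> \<in> AX" "\<phi> x = 1" "\<forall>z\<in>{z. 0 \<le> w z}. \<phi> z = 0"
    using adq_sep[OF AX cF] by blast
  define M' where "M' = max M 0"
  define p where "p = (\<lambda>z. M' * G ((-2) * \<phi> z + 1))"
  have pA: "p \<in> AX" unfolding p_def using adq_scale[OF AX G(5)[OF adq_affine[OF AX \<phi>(1)]]] .
  have p0: "\<forall>z. p z \<ge> 0" unfolding p_def M'_def using G(1) by simp
  have wp: "\<forall>z. w z \<le> p z"
  proof
    fix z show "w z \<le> p z"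
    proof (cases "0 \<le> w z")
      case True
      then have "\<phi> z = 0" using \<phi>(3) by simp
      then have "p z = M'" unfolding p_def using G(4) by simp
      then show ?thesis using w(3) unfolding M'_def by (metis max.coboundedI1)
    next
      case False then show ?thesis using p0 by (meson le_less_trans less_le_not_le not_le)
    qed
  qed
  have c: "continuous_on UNIV \<phi>" using adq_cont[OF AX \<phi>(1)] .
  then have "\<forall>\<epsilon>>0. \<exists>d>0. \<forall>z\<in>UNIV. dist z x < d \<longrightarrow> dist (\<phi> z) (\<phi> x) < \<epsilon>"
    unfolding continuous_on_iff by blast
  then obtain s where s: "s > 0" "\<forall>z. dist z x < s \<longrightarrow> dist (\<phi> z) (\<phi> x) < 1/2"
    by (metis UNIV_I half_gt_zero_iff zero_less_one)
  have "\<forall>z. dist x z < s \<longrightarrow> p z = 0"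
  proof (intro allI impI)
    fix z assume "dist x z < s"
    then have "dist (\<phi> z) (\<phi> x) < 1/2" using s(2) by (metis dist_commute)
    then have "(-2) * \<phi> z + 1 \<le> 0" using \<phi>(2) by (simp add: dist_real_def abs_if split: if_splits)
    then show "p z = 0" unfolding p_def using G(3) by simp
  qed
  then have "T p y = 0" using supp_zero[OF S pA p0 s(1)] by blast
  moreover have "T w y \<le> T p y" using Tmono[OF w(1) pA] wp by blast
  ultimately show ?thesis by simp
qed

lemma supp_formula:
  assumes S: "supp_pt x y" and f: "f \<in> bounded_part AX"
  shows "T f y = e y * f x"
proof -
  have fA: "f \<in> AX" and "bounded (range f)" using f by (auto simp: bounded_part_def)
  then obtain M where M: "\<forall>z. norm (f z) \<le> M" unfolding bounded_iff by auto
  have ey: "e y > 0" using e_pos .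
  have up: "T f y / e y \<le> c" if c: "f x < c" for c
  proof -
    have wA: "(\<lambda>z. f z - c) \<in> AX" using adq_diff[OF AX fA adq_const[OF AX]] .
    have bnd: "\<forall>z. f z - c \<le> M - c"
    proof
      fix z have "\<bar>f z\<bar> \<le> M" using M by simp
      then show "f z - c \<le> M - c" by (simp add: abs_le_iff)
    qed
    have "T (\<lambda>z. f z - c) y \<le> 0" by (rule supp_ub[OF S wA _ bnd]) (use c in auto)
    then have "T f y - c * e y \<le> 0" using Tdiff[OF fA adq_const[OF AX, of c]] Tconst[of c] by simp
    then show ?thesis using ey by (simp add: divide_le_eq)
  qed
  have lo: "c \<le> T f y / e y" if c: "c < f x" for c
  proof -
    have wA: "(\<lambda>z. c - f z) \<in> AX" using adq_diff[OF AX adq_const[OF AX] fA] .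
    have bnd: "\<forall>z. c - f z \<le> c + M"
    proof
      fix z have "\<bar>f z\<bar> \<le> M" using M by simp
      then show "c - f z \<le> c + M" by (simp add: abs_le_iff)
    qed
    have "T (\<lambda>z. c - f z) y \<le> 0" by (rule supp_ub[OF S wA _ bnd]) (use c in auto)
    then have "c * e y - T f y \<le> 0" using Tdiff[OF adq_const[OF AX, of c] fA] Tconst[of c] by simp
    then show ?thesis using ey by (simp add: le_divide_eq)
  qed
  have "T f y / e y \<le> f x" using up by (meson dense_ge)
  moreover have "f x \<le> T f y / e y" using lo by (meson dense_le)
  ultimately have "T f y / e y = f x" by simp
  then show ?thesis using ey by (simp add: divide_eq_eq mult.commute)
qed

lemma supp_lower:
  assumes S: "supp_pt x y" and f: "f \<in> AX" "\<forall>z. f z \<ge> 0"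
  shows "e y * f x \<le> T f y"
proof -
  obtain G :: "real \<Rightarrow> real" where G: "\<And>t. 0 \<le> G t" "\<And>t. G t \<le> 1"
    "\<And>t. t \<le> 0 \<Longrightarrow> G t = 0" "\<And>t. t \<ge> 1 \<Longrightarrow> G t = 1"
    "\<And>f. f \<in> AX \<Longrightarrow> (\<lambda>x. G (f x)) \<in> AX" using adq_G[OF AX] by metis
  have ey: "e y > 0" using e_pos .
  have Tf0: "T f y \<ge> 0" using Tpos[OF f(1)] f(2) by blast
  have lo: "c \<le> T f y / e y" if c: "c < f x" for c
  proof (cases "c \<le> 0")
    case True then show ?thesis using Tf0 ey by (meson divide_nonneg_pos order_trans)
  next
    case False
    have cf: "continuous_on UNIV f" using adq_cont[OF AX f(1)] .
    have "closed {z. f z \<le> (\<lambda>_. c) z}" using closed_Collect_le[OF cf continuous_on_const] .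
    then have cF: "closed {z. f z \<le> c}" by simp
    have "x \<notin> {z. f z \<le> c}" using c by simp
    then obtain \<phi> where \<phi>: "\<phi> \<in> AX" "\<phi> x = 1" "\<forall>z\<in>{z. f z \<le> c}. \<phi> z = 0"
      using adq_sep[OF AX cF] by blast
    define b where "b = (\<lambda>z. c * G (2 * \<phi> z))"
    have bA: "b \<in> AX" unfolding b_def using adq_scale[OF AX G(5)[OF adq_scale[OF AX \<phi>(1)]]] .
    have "\<forall>z. \<bar>b z\<bar> \<le> c" unfolding b_def using G(1,2) False
      by (simp add: abs_mult mult_left_le)
    then have bB: "b \<in> bounded_part AX" using bpI[OF bA] by blast
    have bf: "\<forall>z. b z \<le> f z"
    proof
      fix z show "b z \<le> f z"
      proof (cases "\<phi> z = 0")
        case True then show ?thesis unfolding b_def using G(3) f(2) by simp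
      next
        case nz: False
        then have "f z > c" using \<phi>(3) by force
        moreover have "b z \<le> c" unfolding b_def using G(2) False by (simp add: mult_left_le)
        ultimately show ?thesis by simp
      qed
    qed
    have "T b y = e y * b x" using supp_formula[OF S bB] .
    also have "b x = c" unfolding b_def using \<phi>(2) G(4) by simp
    finally have "T b y = e y * c" .
    moreover have "T b y \<le> T f y" using Tmono[OF bA f(1)] bf by blast
    ultimately show ?thesis using ey by (simp add: le_divide_eq mult.commute)
  qed
  have "f x \<le> T f y / e y" using lo by (meson dense_le)
  then show ?thesis using ey by (simp add: le_divide_eq mult.commute)
qed

lemma k_cont:
  assumes k: "\<forall>y. supp_pt (k y) y"
  shows "continuous_on UNIV k"
  unfolding continuous_on_iff
proof (intro ballI allI impI)
  fix y :: 'b and \<epsilon> :: real assume \<epsilon>: "\<epsilon> > 0"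
  obtain b where b: "b \<in> AX" "\<forall>z. 0 \<le> b z \<and> b z \<le> 1" "b (k y) = 1" "\<forall>z. z \<notin> ball (k y) \<epsilon> \<longrightarrow> b z = 0"
    using adq_bump[OF AX, of "ball (k y) \<epsilon>" "k y"] \<epsilon> by auto
  have "\<forall>z. \<bar>b z\<bar> \<le> 1" using b(2) by auto
  then have bB: "b \<in> bounded_part AX" using bpI[OF b(1)] by blast
  have form: "T b y' = e y' * b (k y')" for y' using supp_formula[OF k[rule_format] bB] .
  have pos: "T b y > 0" using form[of y] b(3) e_pos[of y] by simp
  have "\<forall>\<epsilon>>0. \<exists>d>0. \<forall>z\<in>UNIV. dist z y < d \<longrightarrow> dist (T b z) (T b y) < \<epsilon>"
    using Tcont[OF b(1)] unfolding continuous_on_iff by blast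
  then obtain d where d: "d > 0" "\<forall>z. dist z y < d \<longrightarrow> dist (T b z) (T b y) < T b y"
    using pos by blast
  show "\<exists>d>0. \<forall>y'\<in>UNIV. dist y' y < d \<longrightarrow> dist (k y') (k y) < \<epsilon>"
  proof (intro exI[of _ d] conjI ballI impI)
    fix y' assume "dist y' y < d"
    then have "dist (T b y') (T b y) < T b y" using d(2) by blast
    then have "T b y' > 0" by (simp add: dist_real_def abs_if split: if_splits)
    then have "b (k y') \<noteq> 0" using form[of y'] by auto
    then have "k y' \<in> ball (k y) \<epsilon>" using b(4) by blast
    then show "dist (k y') (k y) < \<epsilon>" by (simp add: dist_commute)
  qed (use d in auto)
qed

lemma main:
  assumes C: "cond_a_or_b AX"
  shows "\<exists>k. continuous_on UNIV k \<and> (\<forall>f\<in>bounded_part AX. \<forall>y. T f y = e y * f (k y))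
     \<and> (\<forall>f\<in>AX. (\<forall>z. f z \<ge> 0) \<longrightarrow> (\<forall>y. e y * f (k y) \<le> T f y))"
proof -
  define k where "k y = (SOME x. supp_pt x y)" for y
  have k: "\<forall>y. supp_pt (k y) y" unfolding k_def using exists_supp[OF C] by (metis someI_ex)
  show ?thesis
    using k_cont[OF k] supp_formula k supp_lower by blast
qed

end


lemma combine_ineq:
  fixes a t u b :: real
  assumes "a * u \<le> t" "b * t \<le> u" "a * b = 1" "a > 0"
  shows "t = a * u"
proof -
  have "a * (b * t) \<le> a * u" using mult_left_mono[OF assms(2)] assms(4) by simp
  then have "t \<le> a * u" using assms(3) by (simp add: mult.assoc[symmetric])
  then show ?thesis using assms(1) by simp
qed

lemma full_formula:
  fixes AX :: "('a::metric_space \<Rightarrow> real) set" and AY :: "('b::metric_space \<Rightarrow> real) set"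
  assumes AX: "adequate AX" and AY: "adequate AY" and T: "order_iso AX AY T"
    and low: "\<forall>f\<in>AX. (\<forall>z. f z \<ge> 0) \<longrightarrow> (\<forall>y. T (\<lambda>_. 1) y * f (k y) \<le> T f y)"
    and lowS: "\<forall>g\<in>AY. (\<forall>z. g z \<ge> 0) \<longrightarrow> (\<forall>x. S (\<lambda>_. 1) x * g (h x) \<le> S g x)"
    and ST: "\<forall>f\<in>AX. S (T f) = f"
    and E: "\<forall>y. T (\<lambda>_. 1) y * S (\<lambda>_. 1) (k y) = 1" and hk: "\<forall>y. h (k y) = y"
    and ep: "\<forall>y. T (\<lambda>_. 1) y > 0"
    and f: "f \<in> AX"
  shows "T f = (\<lambda>y. T (\<lambda>_. 1) y * f (k y))"
proof -
  have nn: "T u y = T (\<lambda>_. 1) y * u (k y)" if u: "u \<in> AX" "\<forall>z. u z \<ge> 0" for u y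
  proof -
    have l1: "T (\<lambda>_. 1) y * u (k y) \<le> T u y" using low u by blast
    have TuA: "T u \<in> AY" using oi_in[OF T u(1)] .
    have "\<forall>z. T u z \<ge> 0" using oi_pos[OF T u(1)] u(2) by blast
    then have "S (\<lambda>_. 1) (k y) * T u (h (k y)) \<le> S (T u) (k y)" using lowS TuA by blast
    then have l2: "S (\<lambda>_. 1) (k y) * T u y \<le> u (k y)" using hk ST u(1) by simp
    show ?thesis using combine_ineq[OF l1 l2 E[rule_format] ep[rule_format]] .
  qed
  obtain u v where uv: "u \<in> AX" "v \<in> AX" "\<forall>x. u x \<ge> 0" "\<forall>x. v x \<ge> 0" "f = (\<lambda>x. u x - v x)"
    using adq_decomp[OF AX f] by blast
  have "T f = (\<lambda>y. T u y - T v y)" using uv(5) oi_diff[OF AX T uv(1,2)] by simp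
  also have "\<dots> = (\<lambda>y. T (\<lambda>_. 1) y * f (k y))" using nn uv by (simp add: right_diff_distrib)
  finally show ?thesis .
qed

theorem theorem4p4:
  fixes AX :: "('a::metric_space \<Rightarrow> real) set"
    and AY :: "('b::metric_space \<Rightarrow> real) set"
    and T :: "('a \<Rightarrow> real) \<Rightarrow> ('b \<Rightarrow> real)"
  assumes "adequate AX" and "cond_a_or_b AX"
    and "adequate AY" and "cond_a_or_b AY"
    and "order_iso AX AY T"
    and "T ` bounded_part AX = bounded_part AY"
  shows "\<exists>h k. homeomorphism (UNIV::'a set) (UNIV::'b set) h k \<and>
    (\<forall>f\<in>AX. T f = (\<lambda>y. T (\<lambda>_. 1) y * f (k y))) \<and>
    (\<forall>g\<in>AY. inv_into AX T g = (\<lambda>x. inv_into AX T (\<lambda>_. 1) x * g (h x)))"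
proof -
  note AX = assms(1) and CX = assms(2) and AY = assms(3) and CY = assms(4) and T = assms(5) and Tb = assms(6)
  define S where "S = inv_into AX T"
  have S: "order_iso AY AX S" unfolding S_def using oi_inv[OF T AX] .
  have Sb: "S ` bounded_part AY = bounded_part AX" unfolding S_def using oi_inv_bdd[OF T Tb] .
  interpret P: OI AX AY T using AX AY T Tb by unfold_locales
  interpret Q: OI AY AX S using AX AY S Sb by unfold_locales
  obtain k where k: "continuous_on UNIV k" "\<forall>f\<in>bounded_part AX. \<forall>y. T f y = T (\<lambda>_. 1) y * f (k y)"
     "\<forall>f\<in>AX. (\<forall>z. f z \<ge> 0) \<longrightarrow> (\<forall>y. T (\<lambda>_. 1) y * f (k y) \<le> T f y)"
    using P.main[OF CX] by blast
  obtain h where h: "continuous_on UNIV h" "\<forall>g\<in>bounded_part AY. \<forall>x. S g x = S (\<lambda>_. 1) x * g (h x)"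
     "\<forall>g\<in>AY. (\<forall>z. g z \<ge> 0) \<longrightarrow> (\<forall>x. S (\<lambda>_. 1) x * g (h x) \<le> S g x)"
    using Q.main[OF CY] by blast
  have bij: "bij_betw T AX AY" using T oi_bij by blast
  have TS: "T (S g) = g" if "g \<in> AY" for g
    unfolding S_def using that bij by (simp add: bij_betw_def f_inv_into_f)
  have ST: "S (T f) = f" if "f \<in> AX" for f
    unfolding S_def using that bij by (simp add: bij_betw_def)
  have TbB: "T f \<in> bounded_part AY" if "f \<in> bounded_part AX" for f using Tb that by blast
  have SbB: "S g \<in> bounded_part AX" if "g \<in> bounded_part AY" for g using Sb that by blast
  have bA: "bounded_part AX \<subseteq> AX" "bounded_part AY \<subseteq> AY" by (auto simp: bounded_part_def)
  have oneY: "(\<lambda>_. 1) \<in> bounded_part AY" using adq_const[OF AY] unfolding bounded_part_def by auto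
  have oneX: "(\<lambda>_. 1) \<in> bounded_part AX" using adq_const[OF AX] unfolding bounded_part_def by auto
  have E1: "\<forall>y. T (\<lambda>_. 1) y * S (\<lambda>_. 1) (k y) = 1"
  proof
    fix y
    have "T (S (\<lambda>_. 1)) y = T (\<lambda>_. 1) y * S (\<lambda>_. 1) (k y)" using k(2) SbB[OF oneY] by blast
    then show "T (\<lambda>_. 1) y * S (\<lambda>_. 1) (k y) = 1" using TS[OF adq_const[OF AY]] by simp
  qed
  have E2: "\<forall>x. S (\<lambda>_. 1) x * T (\<lambda>_. 1) (h x) = 1"
  proof
    fix x
    have "S (T (\<lambda>_. 1)) x = S (\<lambda>_. 1) x * T (\<lambda>_. 1) (h x)" using h(2) TbB[OF oneX] by blast
    then show "S (\<lambda>_. 1) x * T (\<lambda>_. 1) (h x) = 1" using ST[OF adq_const[OF AX]] by simp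
  qed
  have hk: "\<forall>y. h (k y) = y"
  proof (rule ccontr)
    assume "\<not> (\<forall>y. h (k y) = y)"
    then obtain y where ne: "h (k y) \<noteq> y" by blast
    have "open (- {h (k y)})" by auto
    moreover have "y \<in> - {h (k y)}" using ne by auto
    ultimately obtain g where g: "g \<in> AY" "\<forall>z. 0 \<le> g z \<and> g z \<le> 1" "g y = 1" "\<forall>z. z \<notin> - {h (k y)} \<longrightarrow> g z = 0"
      using adq_bump[OF AY] by metis
    have gB: "g \<in> bounded_part AY" using g(1,2) P.bdd_range01 unfolding bounded_part_def by auto
    have "g y = T (S g) y" using TS[OF g(1)] by simp
    also have "\<dots> = T (\<lambda>_. 1) y * S g (k y)" using k(2) SbB[OF gB] by blast
    also have "S g (k y) = S (\<lambda>_. 1) (k y) * g (h (k y))" using h(2) gB by blast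
    also have "g (h (k y)) = 0" using g(4) by simp
    finally show False using g(3) by simp
  qed
  have kh: "\<forall>x. k (h x) = x"
  proof (rule ccontr)
    assume "\<not> (\<forall>x. k (h x) = x)"
    then obtain x where ne: "k (h x) \<noteq> x" by blast
    have "open (- {k (h x)})" by auto
    moreover have "x \<in> - {k (h x)}" using ne by auto
    ultimately obtain f where f: "f \<in> AX" "\<forall>z. 0 \<le> f z \<and> f z \<le> 1" "f x = 1" "\<forall>z. z \<notin> - {k (h x)} \<longrightarrow> f z = 0"
      using adq_bump[OF AX] by metis
    have fB: "f \<in> bounded_part AX" using f(1,2) P.bdd_range01 unfolding bounded_part_def by auto
    have "f x = S (T f) x" using ST[OF f(1)] by simp
    also have "\<dots> = S (\<lambda>_. 1) x * T f (h x)" using h(2) TbB[OF fB] by blast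
    also have "T f (h x) = T (\<lambda>_. 1) (h x) * f (k (h x))" using k(2) fB by blast
    also have "f (k (h x)) = 0" using f(4) by simp
    finally show False using f(3) by simp
  qed
  have formT: "\<forall>f\<in>AX. T f = (\<lambda>y. T (\<lambda>_. 1) y * f (k y))"
    using full_formula[OF AX AY T k(3) h(3) _ E1 hk] ST P.e_pos by blast
  have formS: "\<forall>g\<in>AY. S g = (\<lambda>x. S (\<lambda>_. 1) x * g (h x))"
    using full_formula[OF AY AX S h(3) k(3) _ E2 kh] TS Q.e_pos by blast
  have homeo: "homeomorphism (UNIV::'a set) (UNIV::'b set) h k"
    unfolding homeomorphism_def
  proof (intro conjI)
    show "\<forall>x\<in>UNIV. k (h x) = x" using kh by blast
    show "\<forall>y\<in>UNIV. h (k y) = y" using hk by blast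
    show "h ` UNIV = UNIV" using hk by (metis surj_def)
    show "k ` UNIV = UNIV" using kh by (metis surj_def)
  qed (use h(1) k(1) in auto)
  show ?thesis using homeo formT formS unfolding S_def by blast
qed

end
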